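(* $$\lim_{k \to \infty} \sum_{n=0}^{\infty} \frac{1}{n!}\left\langle {n \atop k} \right\rangle = 2,$$ where the limit is over nonnegative integers $k$.
   Context: For integers $n,k\ge 0$, the Eulerian number $\left\langle {n \atop k} \right\rangle$ is the number of permutations of $\{1,\ldots,n\}$ with exactly $k$ ascents (positions $i$ with $\sigma(i)<\sigma(i+1)$), with $\left\langle {0 \atop 0} \right\rangle=1$ and $\left\langle {0 \atop k} \right\rangle=0$ for $k\ge1$; in particular $\left\langle {n \atop k} \right\rangle=0$ when $n<k$. Equivalently they satisfy $\left\langle {n \atop k} \right\rangle = (k+1)\left\langle {n-1 \atop k} \right\rangle + (n-k)\left\langle {n-1 \atop k-1} \right\rangle$. *)

theory Defs
  imports "HOL-Analysis.Analysis"
begin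

fun eulerian :: "nat \<Rightarrow> nat \<Rightarrow> nat" where
  "eulerian 0 k = (if k = 0 then 1 else 0)"
| "eulerian (Suc n) 0 = eulerian n 0"
| "eulerian (Suc n) (Suc k) =
     (Suc k + 1) * eulerian n (Suc k) + (Suc n - Suc k) * eulerian n k"

end

theory Submission
  imports Defs "HOL-Complex_Analysis.Complex_Analysis"
begin

unbundle no vec_syntax
unbundle fps_syntax


lemma eul_zero: "n < k \<Longrightarrow> eulerian n k = 0"
proof (induction n arbitrary: k)
  case 0 then show ?case by simp
next
  case (Suc n)
  then obtain k' where k: "k = Suc k'" by (cases k) auto
  with Suc show ?case by simp
qed

definition Fe :: "nat \<Rightarrow> nat \<Rightarrow> int" where
  "Fe n k = (\<Sum>j\<le>k. (-1)^j * int ((n+1) choose j) * int (k+1-j)^n)"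

lemma Fe_0: "Fe n 0 = 1" by (simp add: Fe_def)

lemma aux: "(a+b)*m - c*a + d*b = (0::int) \<Longrightarrow> (-s)*(a+b)*m^(n+1) = c*((-s)*a*m^n) + d*(s*b*m^n)"
proof -
  assume h: "(a+b)*m - c*a + d*b = (0::int)"
  have "(-s)*(a+b)*m^(n+1) - (c*((-s)*a*m^n) + d*(s*b*m^n)) = -s*m^n*((a+b)*m - c*a + d*b)"
    by (simp add: algebra_simps)
  then show ?thesis using h by simp
qed

lemma Fe_rec: "Fe (Suc n) (Suc k) = int (k+2) * Fe n (Suc k) + (int n - int k) * Fe n k"
proof -
  have L: "Fe (Suc n) (Suc k) = int (k+2)^(n+1) + (\<Sum>i\<le>k. (-1)^(Suc i) * (int ((n+1) choose (Suc i)) + int ((n+1) choose i)) * int (k+1-i)^(n+1))"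
    unfolding Fe_def by (simp add: sum.atMost_Suc_shift del: sum.atMost_Suc) (intro sum.cong, auto simp: algebra_simps)
  have R1: "Fe n (Suc k) = int (k+2)^n + (\<Sum>i\<le>k. (-1)^(Suc i) * int ((n+1) choose (Suc i)) * int (k+1-i)^n)"
    unfolding Fe_def by (simp add: sum.atMost_Suc_shift del: sum.atMost_Suc) (intro sum.cong, auto simp: algebra_simps)
  have trm: "(-1)^(Suc i) * (int ((n+1) choose (Suc i)) + int ((n+1) choose i)) * int (k+1-i)^(n+1)
     = int (k+2) * ((-1)^(Suc i) * int ((n+1) choose (Suc i)) * int (k+1-i)^n)
       + (int n - int k) * ((-1)^i * int ((n+1) choose i) * int (k+1-i)^n)" if "i \<le> k" for i
  proof -
    have b1: "int (Suc i) * int ((n+1) choose (Suc i)) = int (n+1) * int (n choose i)"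
      using Suc_times_binomial[of i n] by (metis Suc_eq_plus1 of_nat_mult)
    have b2: "int (n+1-i) * int ((n+1) choose i) = int (n+1) * int (n choose i)"
      using binomial_absorb_comp[of "n+1" i] by (metis add_diff_cancel_right' of_nat_mult)
    have m: "int (k+1-i) = int k + 1 - int i" using that by simp
    have n1: "int (n+1-i) = int n + 1 - int i \<or> (n choose i) = 0"
      by (cases "i \<le> n+1") auto
    have "(int ((n+1) choose (Suc i)) + int ((n+1) choose i)) * int (k+1-i)
        - int (k+2) * int ((n+1) choose (Suc i)) + (int n - int k) * int ((n+1) choose i) = 0"
    proof -
      have "int (Suc i) * int ((n+1) choose (Suc i)) = (int n + 1 - int i) * int ((n+1) choose i)"
        using b1 b2 n1 by (cases "i \<le> n+1") (auto simp: binomial_eq_0 algebra_simps)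
      then show ?thesis using m by (simp add: algebra_simps)
    qed
    from aux[OF this, of "(-1)^i" n] show ?thesis by simp
  qed
  have "Fe (Suc n) (Suc k) = int (k+2)^(n+1) + (\<Sum>i\<le>k. int (k+2) * ((-1)^(Suc i) * int ((n+1) choose (Suc i)) * int (k+1-i)^n)
       + (int n - int k) * ((-1)^i * int ((n+1) choose i) * int (k+1-i)^n))"
    unfolding L using trm by (intro arg_cong2[where f="(+)"] sum.cong) auto
  also have "\<dots> = int (k+2) * Fe n (Suc k) + (int n - int k) * Fe n k"
    unfolding R1 Fe_def[of n k] sum.distrib by (simp add: sum_distrib_left distrib_left)
  finally show ?thesis .
qed

lemma eul_F: "int (eulerian n k) = Fe n k"
proof (induction n arbitrary: k)
  case 0
  show ?case
  proof (cases k)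
    case 0 then show ?thesis by (simp add: Fe_def)
  next
    case (Suc k')
    have "Fe 0 (Suc k') = (\<Sum>j\<le>Suc k'. (-1)^j * int (1 choose j))" by (simp add: Fe_def)
    also have "\<dots> = 0"
    proof -
      have "(\<Sum>i\<le>k'. - ((- 1) ^ i * int (0 choose i))) = -1" by (induct k') auto
      then show ?thesis by (simp add: sum.atMost_Suc_shift del: sum.atMost_Suc)
    qed
    finally show ?thesis using Suc by simp
  qed
next
  case (Suc n)
  show ?case
  proof (cases k)
    case 0 then show ?thesis using Suc.IH[of 0] by (simp add: Fe_0)
  next
    case (Suc k')
    show ?thesis
    proof (cases "k' \<le> n")
      case True
      have e: "eulerian (Suc n) (Suc k') = (k'+2) * eulerian n (Suc k') + (n-k') * eulerian n k'"
        by simp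
      have "int (eulerian (Suc n) (Suc k')) = int (k'+2) * int (eulerian n (Suc k')) + (int n - int k') * int (eulerian n k')"
        unfolding e by (simp only: of_nat_add of_nat_mult of_nat_diff[OF True])
      then show ?thesis unfolding Suc Fe_rec using Suc.IH[of k'] Suc.IH[of "Suc k'"] by simp
    next
      case False
      then have "Fe n k' = 0" using Suc.IH[of k'] eul_zero[of n k'] by simp
      then show ?thesis unfolding Suc Fe_rec using Suc.IH[of "Suc k'"] False by (simp add: algebra_simps)
    qed
  qed
qed




lemma binom_series: "(\<lambda>n. real (n choose j) * x^n / fact n) sums (x^j * exp x / fact j)"
proof -
  have e: "(\<lambda>i. x^j / fact j * (x^i /\<^sub>R fact i)) sums (x^j / fact j * exp x)"
    by (intro sums_mult exp_converges)
  have eq: "real ((i+j) choose j) * x^(i+j) / fact (i+j) = x^j / fact j * (x^i /\<^sub>R fact i)" for i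
    by (simp add: binomial_fact power_add field_simps)
  have "(\<lambda>i. real ((i+j) choose j) * x^(i+j) / fact (i+j)) sums (x^j * exp x / fact j)"
    using e unfolding eq by (simp add: field_simps)
  then have "(\<lambda>n. real (n choose j) * x^n / fact n) sums (x^j * exp x / fact j + (\<Sum>i<j. real (i choose j) * x^i / fact i))"
    by (subst (asm) sums_iff_shift) 
  moreover have "(\<Sum>i<j. real (i choose j) * x^i / fact i) = 0"
    by (intro sum.neutral) (auto simp: binomial_eq_0)
  ultimately show ?thesis by simp
qed

definition Sser :: "nat \<Rightarrow> real \<Rightarrow> real" where
  "Sser j x = (if j = 0 then exp x else x^j * exp x / fact j + x^(j-1) * exp x / fact (j-1))"

lemma binom_series1: "(\<lambda>n. real ((n+1) choose j) * x^n / fact n) sums Sser j x"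
proof (cases j)
  case 0
  then show ?thesis using exp_converges[of x] by (simp add: Sser_def field_simps)
next
  case (Suc i)
  have "(\<lambda>n. real (n choose i) * x^n / fact n + real (n choose j) * x^n / fact n) sums (x^i * exp x / fact i + x^j * exp x / fact j)"
    by (intro sums_add binom_series)
  then show ?thesis using Suc by (simp add: Sser_def field_simps)
qed

definition clsd :: "nat \<Rightarrow> real" where
  "clsd k = (\<Sum>j\<le>k. (-1)^j * Sser j (real (k+1-j)))"

lemma eul_real: "real (eulerian n k) / fact n = (\<Sum>j\<le>k. (-1)^j * (real ((n+1) choose j) * real (k+1-j)^n / fact n))"
proof -
  have "real (eulerian n k) = real_of_int (int (eulerian n k))" by simp
  also have "\<dots> = (\<Sum>j\<le>k. (-1)^j * real ((n+1) choose j) * real (k+1-j)^n)"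
    unfolding eul_F Fe_def by simp
  finally show ?thesis by (simp add: sum_divide_distrib mult.assoc)
qed

lemma a_sums: "(\<lambda>n. real (eulerian n k) / fact n) sums clsd k"
  unfolding eul_real clsd_def
  by (intro sums_sum sums_mult binom_series1)

lemma neg_pow: "(- (x::real))^n = (-1)^n * x^n" by (induct n) auto

definition tt :: "nat \<Rightarrow> nat \<Rightarrow> real" where
  "tt p n = (if p \<le> n then (- real p)^(n-p) / fact (n-p) else 0)"

lemma clsd_tt: "clsd k = (\<Sum>p\<le>k+1. exp (real p) * (tt p (k+1) - tt p k)) + (if k = 0 then 1 else 0)"
proof -
  have trm: "(-1)^(k+1-p) * Sser (k+1-p) (real p) = exp (real p) * (tt p (k+1) - tt p k)"
    if "p \<in> {1..k+1}" for p
  proof (cases "p = k+1")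
    case True then show ?thesis by (simp add: Sser_def tt_def)
  next
    case False
    have pk: "p \<le> k" using that False by auto
    define i where "i = k - p"
    have i: "k+1-p = Suc i" "k - p = i" "p \<le> k" using pk by (auto simp: i_def)
    have "tt p (k+1) = (-1)^(Suc i) * real p^(Suc i) / fact (Suc i)" "tt p k = (-1)^i * real p^i / fact i"
      using i by (simp_all add: tt_def neg_pow[of "real p"])
    moreover have "Sser (k+1-p) (real p) = real p^(Suc i) * exp (real p) / fact (Suc i) + real p^i * exp (real p) / fact i"
      using i by (simp add: Sser_def)
    ultimately show ?thesis using i
      by (simp add: algebra_simps)
  qed
  have "clsd k = (\<Sum>p\<in>{1..k+1}. (-1)^(k+1-p) * Sser (k+1-p) (real p))"
    unfolding clsd_def
    by (rule sum.reindex_bij_witness[of _ "\<lambda>p. k+1-p" "\<lambda>j. k+1-j"]) auto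
  also have "\<dots> = (\<Sum>p\<in>{1..k+1}. exp (real p) * (tt p (k+1) - tt p k))"
    using trm by (rule sum.cong[OF refl])
  also have "\<dots> = (\<Sum>p\<le>k+1. exp (real p) * (tt p (k+1) - tt p k)) + (if k = 0 then 1 else 0)"
  proof -
    have "{..k+1} = insert 0 {1..k+1}" by auto
    then have "(\<Sum>p\<le>k+1. exp (real p) * (tt p (k+1) - tt p k)) = exp 0 * (tt 0 (k+1) - tt 0 k) + (\<Sum>p\<in>{1..k+1}. exp (real p) * (tt p (k+1) - tt p k))"
      by simp
    moreover have "exp 0 * (tt 0 (k+1) - tt 0 k) = - (if k = 0 then 1 else 0)"
      by (simp add: tt_def)
    ultimately show ?thesis by simp
  qed
  finally show ?thesis .
qed





definition Tf :: "nat \<Rightarrow> complex fps" where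
  "Tf p = fps_X^p * fps_exp (- of_nat p)"

lemma Tf_nth: "Tf p $ n = of_real (tt p n)"
  by (simp add: Tf_def tt_def fps_X_power_mult_nth)

definition HN :: "nat \<Rightarrow> complex fps" where
  "HN N = (\<Sum>p\<le>N. fps_const (exp (of_nat p)) * Tf p)"

definition Hf :: "complex fps" where "Hf = Abs_fps (\<lambda>m. HN m $ m)"

lemma HN_nth_real: "HN N $ m = of_real (\<Sum>p\<le>N. exp (real p) * tt p m)"
  by (simp add: HN_def fps_sum_nth Tf_nth of_real_exp)

lemma tt_zero: "m < p \<Longrightarrow> tt p m = 0" by (simp add: tt_def)

lemma HN_nth: assumes "m \<le> N" shows "HN N $ m = Hf $ m"
proof -
  have "(\<Sum>p\<le>N. exp (real p) * tt p m) = (\<Sum>p\<le>m. exp (real p) * tt p m)"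
    using assms by (intro sum.mono_neutral_right) (auto simp: tt_zero)
  then show ?thesis by (simp add: Hf_def HN_nth_real)
qed

lemma Hf_nth_real: "m \<le> N \<Longrightarrow> Hf $ m = of_real (\<Sum>p\<le>N. exp (real p) * tt p m)"
  using HN_nth HN_nth_real by metis

definition Kf :: "complex fps" where "Kf = fps_X * fps_const (exp 1) * fps_exp (-1)"

lemma Tf0: "Tf 0 = 1" by (simp add: Tf_def)

lemma TfK: "Tf p * Kf = fps_const (exp 1) * Tf (Suc p)"
proof -
  have "Tf p * Kf = fps_const (exp 1) * (fps_X^Suc p * (fps_exp (- of_nat p) * fps_exp (-1)))"
    by (simp add: Tf_def Kf_def algebra_simps)
  also have "fps_exp (- of_nat p) * fps_exp (-1) = fps_exp (- of_nat (Suc p) :: complex)"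
    by (simp add: fps_exp_add_mult[symmetric] algebra_simps)
  finally show ?thesis by (simp add: Tf_def)
qed

lemma HNK: "HN N * Kf = HN (Suc N) - 1"
proof -
  have "HN N * Kf = (\<Sum>p\<le>N. fps_const (exp (of_nat (Suc p))) * Tf (Suc p))"
    unfolding HN_def sum_distrib_right
  proof (intro sum.cong refl)
    fix p
    have "fps_const (exp (of_nat p)) * Tf p * Kf = fps_const (exp (of_nat p)) * fps_const (exp 1) * Tf (Suc p)"
      by (simp add: TfK mult.assoc)
    also have "fps_const (exp (of_nat p)) * fps_const (exp 1) = (fps_const (exp (of_nat (Suc p))) :: complex fps)"
      by (simp add: exp_add[symmetric] add.commute)
    finally show "fps_const (exp (of_nat p)) * Tf p * Kf = fps_const (exp (of_nat (Suc p))) * Tf (Suc p)" .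
  qed
  also have "\<dots> = HN (Suc N) - 1"
    unfolding HN_def by (simp add: sum.atMost_Suc_shift Tf0 del: sum.atMost_Suc)
  finally show ?thesis .
qed

lemma HK: "Hf * Kf = Hf - 1"
proof (rule fps_ext)
  fix m
  have "(Hf * Kf) $ m = (HN m * Kf) $ m"
    unfolding fps_mult_nth by (intro sum.cong refl) (simp add: HN_nth)
  also have "\<dots> = Hf $ m - (1::complex fps) $ m"
    by (simp add: HNK HN_nth)
  finally show "(Hf * Kf) $ m = (Hf - 1) $ m" by simp
qed

definition Af :: "complex fps" where "Af = Abs_fps (\<lambda>k. of_real (clsd k))"

lemma Hf0: "Hf $ 0 = 1"
  by (simp add: Hf_nth_real[of 0 0] tt_def)

lemma XA: "fps_X * Af = (Hf - 1) * (1 - fps_X)"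
proof (rule fps_ext)
  fix n
  have eq: "(Hf - 1) * (1 - fps_X) = (Hf - 1) - fps_X * (Hf - 1)" by (simp add: algebra_simps)
  show "(fps_X * Af) $ n = ((Hf - 1) * (1 - fps_X)) $ n"
  proof (cases n)
    case 0 then show ?thesis unfolding eq by (simp add: Hf0)
  next
    case (Suc k)
    have hdiff: "Hf $ Suc k - Hf $ k = of_real (\<Sum>p\<le>k+1. exp (real p) * (tt p (k+1) - tt p k))"
      using Hf_nth_real[of "Suc k" "k+1"] Hf_nth_real[of k "k+1"]
      by (simp add: sum_subtractf algebra_simps del: sum.atMost_Suc)
    have "(fps_X * Af) $ n = of_real (clsd k)" using Suc by (simp add: Af_def)
    also have "\<dots> = of_real (\<Sum>p\<le>k+1. exp (real p) * (tt p (k+1) - tt p k)) + (if k = 0 then 1 else 0)"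
      by (simp add: clsd_tt del: sum.atMost_Suc)
    also have "\<dots> = Hf $ Suc k - Hf $ k + (if k = 0 then 1 else 0)"
      by (subst hdiff) (rule refl)
    also have "\<dots> = ((Hf - 1) * (1 - fps_X)) $ n" unfolding eq using Suc by simp
    finally show ?thesis .
  qed
qed

definition Dfps :: "complex fps" where "Dfps = fps_const (exp (-1)) * fps_exp 1 - fps_X"

lemma Dfps_K: "Dfps = fps_const (exp (-1)) * fps_exp 1 * (1 - Kf)"
proof -
  have "fps_const (exp (-1)) * fps_exp 1 * Kf = fps_X * (fps_const (exp (-1) * exp 1) * (fps_exp 1 * fps_exp (-1)))"
    by (simp add: Kf_def algebra_simps)
  also have "fps_exp 1 * fps_exp (-1) = (1 :: complex fps)"
    by (simp add: fps_exp_add_mult[symmetric])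
  also have "exp (-1) * exp 1 = (1::complex)" by (simp add: exp_add[symmetric])
  finally show ?thesis by (simp add: Dfps_def algebra_simps)
qed

lemma HD: "(Hf - 1) * Dfps = fps_X"
proof -
  have "(Hf - 1) * (1 - Kf) = Kf" using HK by (simp add: algebra_simps)
  then have "(Hf - 1) * Dfps = fps_const (exp (-1)) * fps_exp 1 * Kf"
    unfolding Dfps_K by (metis mult.commute mult.left_commute)
  also have "\<dots> = fps_X" using Dfps_K by (simp add: Dfps_def algebra_simps)
  finally show ?thesis .
qed

lemma AD: "Af * Dfps = 1 - fps_X"
proof -
  have "fps_X * (Af * Dfps) = fps_X * (1 - fps_X)"
    by (metis XA HD mult.assoc mult.commute)
  then show ?thesis by simp
qed





definition cq :: "nat \<Rightarrow> complex" where "cq j = of_real (inverse (fact (j+2)))"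
definition cr :: "nat \<Rightarrow> complex" where "cr j = of_real (2 * inverse (fact (j+3)))"
definition Qs :: "complex \<Rightarrow> complex" where "Qs z = (\<Sum>j. cq j * z^j)"
definition Rs :: "complex \<Rightarrow> complex" where "Rs z = (\<Sum>j. cr j * z^j)"

lemma summable_expn: "summable (\<lambda>n. norm (y::complex)^n / fact n)"
  using summable_exp[of "norm y"] by (simp add: field_simps)

lemma cq_summable: "summable (\<lambda>n. cq n * y^n)"
proof (rule summable_comparison_test')
  show "summable (\<lambda>n. norm y^n / fact n)" by (rule summable_expn)
  fix n :: nat
  have "fact n \<le> (fact (n+2) :: real)" by (intro fact_mono) auto
  then have inv: "inverse (fact (n+2)) \<le> (inverse (fact n) :: real)" by (intro le_imp_inverse_le) auto
  have ineq2: "inverse (fact (n+2)) * norm y^n \<le> inverse (fact n) * norm y^n"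
    using mult_right_mono[OF inv zero_le_power[OF norm_ge_zero, of y n]] by simp
  have eq: "norm (cq n * y^n) = inverse (fact (n+2)) * norm y^n"
    unfolding cq_def norm_mult norm_power norm_of_real by simp
  show "norm (cq n * y^n) \<le> norm y^n / fact n"
    unfolding eq divide_inverse mult.commute[of "norm y^n"] by (rule ineq2)
qed

lemma cr_summable: "summable (\<lambda>n. cr n * y^n)"
proof (rule summable_comparison_test')
  show "summable (\<lambda>n. 2 * (norm y^n / fact n))" by (intro summable_mult summable_expn)
  fix n :: nat
  have "fact n \<le> (fact (n+3) :: real)" by (intro fact_mono) auto
  then have inv: "inverse (fact (n+3)) \<le> (inverse (fact n) :: real)" by (intro le_imp_inverse_le) auto
  have ineq2: "2 * inverse (fact (n+3)) * norm y^n \<le> 2 * (inverse (fact n) * norm y^n)"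
    using mult_right_mono[OF inv zero_le_power[OF norm_ge_zero, of y n]] by (simp add: mult.assoc)
  have eq: "norm (cr n * y^n) = 2 * inverse (fact (n+3)) * norm y^n"
    unfolding cr_def norm_mult norm_power norm_of_real by simp
  show "norm (cr n * y^n) \<le> 2 * (norm y^n / fact n)"
    unfolding eq divide_inverse mult.commute[of "norm y^n"] by (rule ineq2)
qed

lemma Qs_holo: "Qs holomorphic_on UNIV"
  unfolding holomorphic_on_def field_differentiable_def Qs_def
  using termdiffs_strong_converges_everywhere[OF cq_summable] has_field_derivative_at_within by blast

lemma Rs_holo: "Rs holomorphic_on UNIV"
  unfolding holomorphic_on_def field_differentiable_def Rs_def
  using termdiffs_strong_converges_everywhere[OF cr_summable] has_field_derivative_at_within by blast

lemma Qs_eq: "z^2 * Qs z = exp z - 1 - z"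
proof -
  have "(\<lambda>i. (\<lambda>n. z^n /\<^sub>R fact n) (i+2)) sums (exp z - (\<Sum>i<2. z^i /\<^sub>R fact i))"
    by (rule sums_iff_shift[THEN iffD2]) (simp add: exp_converges)
  moreover have "(\<lambda>i. (\<lambda>n. z^n /\<^sub>R fact n) (i+2)) = (\<lambda>i. z^2 * (cq i * z^i))"
    by (rule ext) (simp add: cq_def power_add scaleR_conv_of_real divide_inverse power2_eq_square del: fact_Suc)
  ultimately have "(\<lambda>i. z^2 * (cq i * z^i)) sums (exp z - (\<Sum>i<2. z^i /\<^sub>R fact i))"
    by simp
  moreover have "exp z - (\<Sum>i<2. z^i /\<^sub>R fact i) = exp z - 1 - z" by (simp add: eval_nat_numeral)
  ultimately have "(\<lambda>i. z^2 * (cq i * z^i)) sums (exp z - 1 - z)" by simp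
  moreover have "(\<lambda>i. z^2 * (cq i * z^i)) sums (z^2 * Qs z)"
    unfolding Qs_def by (intro sums_mult summable_sums cq_summable)
  ultimately show ?thesis using sums_unique2 by blast
qed

lemma Rs_eq: "2 * Qs z - 1 = z * Rs z"
proof -
  have "(\<lambda>n. cq n * z^n) sums Qs z" unfolding Qs_def by (intro summable_sums cq_summable)
  then have "(\<lambda>i. (\<lambda>n. cq n * z^n) (i+1)) sums (Qs z - (\<Sum>i<1. cq i * z^i))"
    by (intro sums_iff_shift[THEN iffD2]) simp
  then have "(\<lambda>i. cq (i+1) * z^(i+1)) sums (Qs z - cq 0)" by simp
  then have "(\<lambda>i. 2 * (cq (i+1) * z^(i+1))) sums (2 * Qs z - 1)"
    by (auto dest: sums_mult[where c=2] simp: cq_def algebra_simps)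
  moreover have "(\<lambda>i. 2 * (cq (i+1) * z^(i+1))) = (\<lambda>i. z * (cr i * z^i))"
    by (rule ext) (simp add: cq_def cr_def eval_nat_numeral del: fact_Suc)
  moreover have "(\<lambda>i. z * (cr i * z^i)) sums (z * Rs z)"
    unfolding Rs_def by (intro sums_mult summable_sums cr_summable)
  ultimately show ?thesis using sums_unique2 by metis
qed

lemma Qs0: "Qs 0 = 1/2"
  using powser_zero[of cq] by (simp add: Qs_def cq_def)

lemma ycos: fixes y :: real assumes "0 < y" "y < 2" shows "y * cos y < sin y"
proof -
  have "(\<lambda>x. sin x - x * cos x) 0 < (\<lambda>x. sin x - x * cos x) y"
  proof (rule DERIV_pos_imp_increasing_open[OF assms(1)])
    fix x :: real assume x: "0 < x" "x < y"
    have "DERIV (\<lambda>x. sin x - x * cos x) x :> cos x - (1 * cos x + x * (- sin x))"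
      by (intro derivative_eq_intros) auto
    moreover have "0 < x * sin x"
      using x assms pi_ge_two by (intro mult_pos_pos sin_gt_zero) auto
    ultimately show "\<exists>d. DERIV (\<lambda>x. sin x - x * cos x) x :> d \<and> 0 < d"
      by (intro exI[of _ "cos x - (1 * cos x + x * (- sin x))"]) (auto simp: algebra_simps)
  next
    show "continuous_on {0..y} (\<lambda>x. sin x - x * cos x)" by (intro continuous_intros)
  qed
  then show ?thesis by simp
qed

lemma no_root_pos:
  fixes x y :: real
  assumes "exp (x-1) * cos y = x" "exp (x-1) * sin y = y" "0 < y" "y < 2"
  shows False
proof -
  have s: "0 < sin y" using assms pi_ge_two by (intro sin_gt_zero) auto
  have "x * sin y = y * cos y" using assms(1,2) by (metis mult.commute mult.left_commute)
  then have "x * sin y < 1 * sin y" using ycos[OF assms(3,4)] by simp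
  then have "x < 1" using s by (simp add: s)
  then have "exp (x-1) < 1" by simp
  then have "exp (x-1) * sin y < sin y" using s by simp
  then show False using assms(2) sin_x_le_x[of y] assms(3) by simp
qed

lemma no_root:
  fixes t :: complex
  assumes "norm t < 2" "exp (t-1) = t"
  shows "t = 1"
proof -
  define x where "x = Re t"
  define y where "y = Im t"
  have e1: "exp (x-1) * cos y = x" using arg_cong[OF assms(2), of Re] unfolding x_def y_def by (simp add: Re_exp)
  have e2: "exp (x-1) * sin y = y" using arg_cong[OF assms(2), of Im] unfolding x_def y_def by (simp add: Im_exp)
  have yb: "\<bar>y\<bar> < 2" using abs_Im_le_cmod[of t] assms(1) y_def by linarith
  consider "y = 0" | "0 < y" | "y < 0" by linarith
  then show ?thesis
  proof cases
    case 1
    then have "exp (x-1) = x" using e1 by simp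
    then have "x = 1" using exp_minus_greater[of "1 - x"] by auto
    then show ?thesis using 1 x_def y_def complex_eq_iff by auto
  next
    case 2 then show ?thesis using no_root_pos[OF e1 e2] yb by auto
  next
    case 3 then show ?thesis using no_root_pos[of x "-y"] e1 e2 yb by auto
  qed
qed





definition qf :: "complex \<Rightarrow> complex" where "qf t = Qs (t - 1)"
definition rf :: "complex \<Rightarrow> complex" where "rf t = Rs (t - 1)"
definition ff :: "complex \<Rightarrow> complex" where "ff t = rf t / qf t"
definition Dfun :: "complex \<Rightarrow> complex" where "Dfun t = exp (-1) * exp t - t"

lemma Dfun_eq: "Dfun t = (t-1)^2 * qf t"
proof -
  have "exp (-1) * exp t = exp (t - 1)" by (simp add: exp_add[symmetric])
  then show ?thesis unfolding Dfun_def qf_def Qs_eq by simp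
qed

lemma rf_eq: "2 * qf t - 1 = (t - 1) * rf t"
  unfolding qf_def rf_def by (rule Rs_eq)

lemma qf_nz: assumes "norm t < 2" shows "qf t \<noteq> 0"
proof
  assume q: "qf t = 0"
  show False
  proof (cases "t = 1")
    case True then show False using q Qs0 by (simp add: qf_def)
  next
    case False
    have "Dfun t = 0" using q Dfun_eq by simp
    then have "exp (t - 1) = t" by (simp add: Dfun_def exp_diff field_simps exp_minus)
    then show False using no_root[OF assms] False by simp
  qed
qed

lemma qf_holo: "qf holomorphic_on UNIV"
proof -
  have "(Qs \<circ> (\<lambda>t. t - 1)) holomorphic_on UNIV"
    by (rule holomorphic_on_compose_gen[OF _ Qs_holo]) (auto intro!: holomorphic_intros)
  then show ?thesis by (simp add: qf_def[abs_def] o_def)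
qed

lemma rf_holo: "rf holomorphic_on UNIV"
proof -
  have "(Rs \<circ> (\<lambda>t. t - 1)) holomorphic_on UNIV"
    by (rule holomorphic_on_compose_gen[OF _ Rs_holo]) (auto intro!: holomorphic_intros)
  then show ?thesis by (simp add: rf_def[abs_def] o_def)
qed

lemma ff_holo: "ff holomorphic_on ball 0 2"
proof -
  have nz: "\<And>z. z \<in> ball 0 2 \<Longrightarrow> qf z \<noteq> 0" using qf_nz by auto
  have "(\<lambda>t. rf t / qf t) holomorphic_on ball 0 2"
    by (rule holomorphic_on_divide[OF holomorphic_on_subset[OF rf_holo] holomorphic_on_subset[OF qf_holo] nz]) auto
  then show ?thesis by (simp add: ff_def[abs_def])
qed

lemma ff_ident: assumes "qf t \<noteq> 0" shows "ff t * (1 - t) * Dfun t = (1 - t)^2 - 2 * Dfun t"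
proof -
  have "ff t * (1 - t) * Dfun t = rf t * (1 - t) * (t-1)^2"
    using assms unfolding ff_def Dfun_eq by (simp add: field_simps)
  also have "\<dots> = (1 - t)^2 - 2 * Dfun t"
  proof -
    have q2: "2 * qf t = (t-1)*rf t + 1" using rf_eq[of t] by (simp add: algebra_simps)
    have "(1 - t)^2 - 2 * Dfun t = (1-t)^2 - (t-1)^2 * (2 * qf t)" unfolding Dfun_eq by (simp add: ac_simps)
    also have "\<dots> = (1-t)^2 - (t-1)^2 * ((t-1)*rf t + 1)" by (simp only: q2)
    also have "\<dots> = rf t * (1 - t) * (t-1)^2" by (simp add: power2_eq_square algebra_simps)
    finally show ?thesis by simp
  qed
  finally show ?thesis .
qed

lemma Dfun_exp: "Dfun has_fps_expansion Dfps"
proof -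
  have h1: "(\<lambda>x. exp (- 1) * exp x :: complex) has_fps_expansion fps_const (exp (- 1)) * fps_exp 1"
    using has_fps_expansion_cmult_left[OF has_fps_expansion_exp1, of "exp (-1) :: complex"] by simp
  have "(\<lambda>x. exp (- 1) * exp x - x :: complex) has_fps_expansion fps_const (exp (- 1)) * fps_exp 1 - fps_X"
    using has_fps_expansion_diff[OF h1 has_fps_expansion_fps_X] by simp
  then show ?thesis by (simp add: Dfun_def[abs_def] Dfps_def)
qed

definition Fx :: "complex fps" where "Fx = fps_expansion ff 0"

lemma F_ident: "Fx * (1 - fps_X) * Dfps = (1 - fps_X)^2 - fps_const 2 * Dfps"
proof -
  have ffe: "ff has_fps_expansion Fx"
    unfolding Fx_def by (rule has_fps_expansion_fps_expansion[OF _ _ ff_holo]) auto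
  have e1: "(\<lambda>t. ff t * (1 - t) * Dfun t) has_fps_expansion Fx * (1 - fps_X) * Dfps"
    by (intro fps_expansion_intros ffe Dfun_exp)
  have ev: "eventually (\<lambda>t. ff t * (1 - t) * Dfun t = (1 - t)^2 - 2 * Dfun t) (nhds 0)"
  proof -
    have "eventually (\<lambda>t. t \<in> ball (0::complex) 2) (nhds 0)"
      by (intro eventually_nhds_in_open) auto
    then show ?thesis by eventually_elim (auto intro!: ff_ident qf_nz)
  qed
  have e2: "(\<lambda>t. (1 - t)^2 - 2 * Dfun t) has_fps_expansion Fx * (1 - fps_X) * Dfps"
    using e1 has_fps_expansion_cong[OF ev refl] by simp
  have e3: "(\<lambda>t. (1 - t)^2 - 2 * Dfun t) has_fps_expansion (1 - fps_X)^2 - fps_const 2 * Dfps"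
    by (intro fps_expansion_intros Dfun_exp)
  show ?thesis using fps_expansion_unique_complex[OF e2 e3] .
qed

definition Geo :: "complex fps" where "Geo = Abs_fps (\<lambda>_. 1)"

lemma Geo_ident: "Geo * (1 - fps_X) = 1"
proof -
  have "Geo * (1 - fps_X) = Geo - fps_X * Geo" by (simp add: algebra_simps)
  also have "\<dots> = 1" by (rule fps_ext) (simp add: Geo_def)
  finally show ?thesis .
qed

lemma Fx_eq: "Fx = Af - fps_const 2 * Geo"
proof -
  have "(Af - fps_const 2 * Geo) * ((1 - fps_X) * Dfps) = (1 - fps_X) * (Af * Dfps) - fps_const 2 * Dfps * (Geo * (1 - fps_X))"
    by (simp add: algebra_simps)
  also have "\<dots> = (1 - fps_X)^2 - fps_const 2 * Dfps"
    unfolding AD Geo_ident by (simp add: power2_eq_square)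
  also have "\<dots> = Fx * ((1 - fps_X) * Dfps)" using F_ident by (simp add: mult.assoc)
  finally have eq: "(Af - fps_const 2 * Geo) * ((1 - fps_X) * Dfps) = Fx * ((1 - fps_X) * Dfps)" .
  have "((1 - fps_X) * Dfps) $ 0 \<noteq> 0" by (simp add: Dfps_def)
  then have "(1 - fps_X) * Dfps \<noteq> 0" by auto
  with eq show ?thesis by simp
qed

lemma coeff_bound: "\<exists>B. \<forall>k. norm (of_real (clsd k) - 2 :: complex) \<le> B * (2/3)^k"
proof -
  have cont: "continuous_on (cball 0 (3/2)) ff"
    by (rule holomorphic_on_imp_continuous_on[OF holomorphic_on_subset[OF ff_holo]]) auto
  have "bounded (ff ` cball 0 (3/2))"
    by (intro compact_imp_bounded compact_continuous_image cont) auto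
  then obtain B where B0: "\<forall>x\<in>cball 0 (3/2). norm (ff x) \<le> B"
    unfolding bounded_iff by blast
  have B: "\<And>x. x \<in> cball 0 (3/2) \<Longrightarrow> norm (ff x) \<le> B" using B0 by blast
  have bnd: "norm (of_real (clsd k) - 2 :: complex) \<le> B * (2/3)^k" for k
  proof -
    have hol: "ff holomorphic_on ball 0 (3/2)" by (rule holomorphic_on_subset[OF ff_holo]) auto
    have ci: "norm ((deriv ^^ k) ff 0) \<le> fact k * B / (3/2)^k"
      by (rule Cauchy_inequality[OF hol cont]) (auto intro!: B)
    have "Fx $ k = (deriv ^^ k) ff 0 / fact k" by (simp add: Fx_def fps_expansion_def)
    moreover have "Fx $ k = of_real (clsd k) - 2" by (simp add: Fx_eq Af_def Geo_def)
    ultimately have "norm (of_real (clsd k) - 2 :: complex) = norm ((deriv ^^ k) ff 0) / fact k"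
      by (simp add: norm_divide)
    also have "\<dots> \<le> (fact k * B / (3/2)^k) / fact k" by (rule divide_right_mono[OF ci]) simp
    also have "\<dots> = B / (3/2)^k" by simp
    also have "\<dots> = B * (2/3)^k" by (simp add: power_divide)
    finally show ?thesis .
  qed
  show ?thesis by (rule exI[where x=B], rule allI, rule bnd)
qed

lemma clsd_lim: "clsd \<longlonglongrightarrow> 2"
proof -
  from coeff_bound obtain B where B0: "\<forall>k. norm (of_real (clsd k) - 2 :: complex) \<le> B * (2/3)^k"
    by (elim exE)
  note B = B0[rule_format]
  have "(\<lambda>k. clsd k - 2) \<longlonglongrightarrow> 0"
  proof (rule Lim_null_comparison)
    show "\<forall>\<^sub>F k in sequentially. norm (clsd k - 2) \<le> B * (2/3)^k"
    proof (intro always_eventually allI)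
      fix k
      have e: "(of_real (clsd k) - 2 :: complex) = of_real (clsd k - 2)" by simp
      have "norm (clsd k - 2) = norm (of_real (clsd k) - 2 :: complex)"
        unfolding e norm_of_real by simp
      also have "\<dots> \<le> B * (2/3)^k" using B[of k] by simp
      finally show "norm (clsd k - 2) \<le> B * (2/3)^k" .
    qed
    show "(\<lambda>k. B * (2/3)^k) \<longlonglongrightarrow> (0::real)"
      by (intro tendsto_mult_right_zero LIMSEQ_power_zero) auto
  qed
  then show ?thesis by (simp add: LIM_zero_iff)
qed

theorem mainTheorem4:
  shows "(\<forall>k. summable (\<lambda>n. real (eulerian n k) / fact n)) \<and>
         (\<lambda>k. \<Sum>n. real (eulerian n k) / fact n) \<longlonglongrightarrow> 2"
proof
  show "\<forall>k. summable (\<lambda>n. real (eulerian n k) / fact n)"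
    using a_sums sums_summable by blast
  have "(\<lambda>k. \<Sum>n. real (eulerian n k) / fact n) = clsd"
    by (rule ext, rule sums_unique[OF a_sums, symmetric])
  then show "(\<lambda>k. \<Sum>n. real (eulerian n k) / fact n) \<longlonglongrightarrow> 2"
    using clsd_lim by simp
qed


end
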